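(* Let $d,m,r$ be positive integers, $\sigma,\tau_s,\tau_g>0$, and let $\phi,\psi:\mathbb{R}\to\mathbb{R}$ be measurable functions with $\mathbb{E}\phi(G)^2<\infty$ and $\mathbb{E}\psi(G)^2<\infty$ for Gaussian $G$. Let $W_i\in\mathbb{R}^{m\times d}$, $W_g,W_u\in\mathbb{R}^{r\times d}$, $W_o\in\mathbb{R}^{d\times m}$, $\widetilde W_o\in\mathbb{R}^{d\times r}$ be independent random matrices with i.i.d. entries, those of $W_i,W_g,W_u$ distributed $\mathcal{N}(0,\sigma^2)$, those of $W_o$ distributed $\mathcal{N}(0,\tau_s^2)$ and those of $\widetilde W_o$ distributed $\mathcal{N}(0,\tau_g^2)$. Define $$F_{\mathrm{single}}(x)=W_o\phi(W_ix),\qquad F_{\mathrm{gate}}(x)=\widetilde W_o\big[\psi(W_gx)\odot W_ux\big],$$ with $\phi,\psi$ applied entrywise and $\odot$ the entrywise product. Fix $x\in\mathbb{R}^d$, let $\nu=\sigma^2\|x\|_2^2$, let $G_\nu\sim\mathcal{N}(0,\nu)$, and let $P_{\mathrm{out}}\in\mathbb{R}^{d\times d}$ be an orthogonal projector. Then $$\mathbb{E}\|P_{\mathrm{out}}F_{\mathrm{single}}(x)\|_2^2=\operatorname{rank}(P_{\mathrm{out}})\,\tau_s^2\,m\,\mathbb{E}\phi(G_\nu)^2,$$ $$\mathbb{E}\|P_{\mathrm{out}}F_{\mathrm{gate}}(x)\|_2^2=\operatorname{rank}(P_{\mathrm{out}})\,\tau_g^2\,r\,\nu\,\mathbb{E}\psi(G_\nu)^2,$$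 and hence, whenever $\operatorname{rank}(P_{\mathrm{out}})\ge1$ and $\mathbb{E}\phi(G_\nu)^2>0$, $$\frac{\mathbb{E}\|P_{\mathrm{out}}F_{\mathrm{gate}}(x)\|_2^2}{\mathbb{E}\|P_{\mathrm{out}}F_{\mathrm{single}}(x)\|_2^2}=\rho_0:=\frac{\tau_g^2}{\tau_s^2}\,\frac{r}{m}\,\frac{\nu\,\mathbb{E}\psi(G_\nu)^2}{\mathbb{E}\phi(G_\nu)^2}.$$
   Context: $F_{\mathrm{single}}$ models a single-branch feed-forward network (e.g. GELU) of hidden width $m$ and $F_{\mathrm{gate}}$ a multiplicative gated feed-forward network (e.g. SwiGLU/GEGLU) of gated width $r$, both at random Gaussian initialization; expectations are over the random weights. An orthogonal projector satisfies $P=P^\top=P^2$. *)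

theory Defs
  imports "HOL-Probability.Probability"
begin

text \<open>Index type for all scalar weight entries of the two networks:
  entries of W_i (m x d), W_g (r x d), W_u (r x d), W_o (d x m), and the gated
  output matrix W_o tilde (d x r).\<close>
datatype ('m, 'd, 'r) wentry =
    Ein 'm 'd | Eg 'r 'd | Eu 'r 'd | Eo 'd 'm | Eot 'd 'r

text \<open>Centered Gaussian with variance v (point mass at 0 when v = 0).\<close>
definition gauss_meas :: "real \<Rightarrow> real measure" where
  "gauss_meas v = (if v > 0 then density lborel (normal_density 0 (sqrt v)) else return lborel 0)"

definition Wi :: "(('m::finite,'d::finite,'r::finite) wentry \<Rightarrow> 'a \<Rightarrow> real) \<Rightarrow> 'a \<Rightarrow> real^'d^'m" where
  "Wi X \<omega> = (\<chi> i j. X (Ein i j) \<omega>)"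
definition Wg :: "(('m::finite,'d::finite,'r::finite) wentry \<Rightarrow> 'a \<Rightarrow> real) \<Rightarrow> 'a \<Rightarrow> real^'d^'r" where
  "Wg X \<omega> = (\<chi> i j. X (Eg i j) \<omega>)"
definition Wu :: "(('m::finite,'d::finite,'r::finite) wentry \<Rightarrow> 'a \<Rightarrow> real) \<Rightarrow> 'a \<Rightarrow> real^'d^'r" where
  "Wu X \<omega> = (\<chi> i j. X (Eu i j) \<omega>)"
definition Wo :: "(('m::finite,'d::finite,'r::finite) wentry \<Rightarrow> 'a \<Rightarrow> real) \<Rightarrow> 'a \<Rightarrow> real^'m^'d" where
  "Wo X \<omega> = (\<chi> i j. X (Eo i j) \<omega>)"
definition Wot :: "(('m::finite,'d::finite,'r::finite) wentry \<Rightarrow> 'a \<Rightarrow> real) \<Rightarrow> 'a \<Rightarrow> real^'r^'d" where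
  "Wot X \<omega> = (\<chi> i j. X (Eot i j) \<omega>)"

definition F_single ::
  "(real \<Rightarrow> real) \<Rightarrow> (('m::finite,'d::finite,'r::finite) wentry \<Rightarrow> 'a \<Rightarrow> real) \<Rightarrow> 'a \<Rightarrow> real^'d \<Rightarrow> real^'d" where
  "F_single \<phi> X \<omega> x = Wo X \<omega> *v (\<chi> k. \<phi> ((Wi X \<omega> *v x) $ k))"

definition F_gate ::
  "(real \<Rightarrow> real) \<Rightarrow> (('m::finite,'d::finite,'r::finite) wentry \<Rightarrow> 'a \<Rightarrow> real) \<Rightarrow> 'a \<Rightarrow> real^'d \<Rightarrow> real^'d" where
  "F_gate \<psi> X \<omega> x = Wot X \<omega> *v (\<chi> k. \<psi> ((Wg X \<omega> *v x) $ k) * (Wu X \<omega> *v x) $ k)"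

end

theory Submission
  imports Defs
begin


lemma proj_sumsq_rank:
  fixes P :: "real^'n^'n"
  assumes sym: "transpose P = P" and idem: "P ** P = P"
  shows "(\<Sum>k\<in>UNIV. \<Sum>j\<in>UNIV. (P$k$j)\<^sup>2) = real (rank P)"
proof -
  define S where "S = range (\<lambda>x. P *v x)"
  have subS: "subspace S" unfolding S_def
    by (intro linear_subspace_image matrix_vector_mul_linear subspace_UNIV)
  obtain B where B: "B \<subseteq> S" "pairwise orthogonal B" "\<And>x. x \<in> B \<Longrightarrow> norm x = 1"
     "independent B" "card B = dim S" "span B = S"
    using orthonormal_basis_subspace[OF subS] by metis
  have finB: "finite B" using B(4) independent_imp_finite by blast
  have fix1: "P *v y = y" if yS: "y \<in> S" for y
  proof -
    obtain z where "y = P *v z" using yS S_def by auto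
    then show ?thesis by (simp add: matrix_vector_mul_assoc idem)
  qed
  have adj: "inner (P *v z) v = inner z (P *v v)" for z v
    by (metis dot_lmul_matrix sym vector_transpose_matrix)
  have bb: "inner b b' = (if b = b' then 1 else 0)" if "b \<in> B" "b' \<in> B" for b b'
    using B(2,3) that by (auto simp: pairwise_def orthogonal_def power2_norm_eq_inner[symmetric])
  have expand: "P *v v = (\<Sum>b\<in>B. inner b v *\<^sub>R b)" for v
  proof -
    define w where "w = P *v v - (\<Sum>b\<in>B. inner b v *\<^sub>R b)"
    have "P *v v \<in> S" by (simp add: S_def)
    moreover have "(\<Sum>b\<in>B. inner b v *\<^sub>R b) \<in> S"
      unfolding B(6)[symmetric] by (intro span_sum span_scale span_base) auto
    ultimately have wS: "w \<in> span B" unfolding w_def using B(6)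
      by (metis span_diff)
    have "orthogonal w b" if "b \<in> B" for b
    proof -
      have "inner b (P *v v) = inner b v"
        using adj[of b v] fix1[of b] that B(1) by auto
      moreover have "inner b (\<Sum>b'\<in>B. inner b' v *\<^sub>R b') = inner b v"
        using that finB by (simp add: inner_sum_right bb if_distrib cong: if_cong)
      ultimately show ?thesis unfolding w_def orthogonal_def
        by (simp add: inner_diff_right inner_commute)
    qed
    then have "orthogonal w w" using orthogonal_to_span[OF wS] by blast
    then have "w = 0" by (simp add: orthogonal_def)
    then show ?thesis unfolding w_def by simp
  qed
  have diag: "P$j$j = (\<Sum>b\<in>B. (b$j)\<^sup>2)" for j
  proof -
    have "P$j$j = (P *v axis j 1)$j"
      by (simp add: matrix_vector_mult_def axis_def if_distrib cong: if_cong)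
    also have "\<dots> = (\<Sum>b\<in>B. inner b (axis j 1) * b$j)"
      by (simp add: expand)
    also have "\<dots> = (\<Sum>b\<in>B. (b$j)\<^sup>2)"
      by (simp add: cart_eq_inner_axis[symmetric] power2_eq_square)
    finally show ?thesis .
  qed
  have "(\<Sum>k\<in>UNIV. \<Sum>j\<in>UNIV. (P$k$j)\<^sup>2) = (\<Sum>j\<in>UNIV. \<Sum>k\<in>UNIV. P$k$j * P$k$j)"
    by (subst sum.swap) (simp add: power2_eq_square)
  also have "\<dots> = (\<Sum>j\<in>UNIV. (transpose P ** P)$j$j)"
    by (simp add: matrix_matrix_mult_def transpose_def)
  also have "\<dots> = (\<Sum>j\<in>UNIV. \<Sum>b\<in>B. (b$j)\<^sup>2)"
    by (simp add: sym idem diag)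
  also have "\<dots> = (\<Sum>b\<in>B. inner b b)"
    by (subst sum.swap) (simp add: inner_vec_def power2_eq_square)
  also have "\<dots> = real (card B)"
    using B(3) by (simp add: power2_norm_eq_inner[symmetric])
  also have "\<dots> = real (rank P)"
    using B(5) by (simp add: rank_dim_range S_def)
  finally show ?thesis .
qed



lemma swap3: "(\<Sum>j'\<in>A. \<Sum>a'\<in>B. \<Sum>a\<in>C. f j' a' a) = (\<Sum>a\<in>C. \<Sum>j'\<in>A. \<Sum>a'\<in>B. f j' a' a)"
proof -
  have "(\<Sum>j'\<in>A. \<Sum>a'\<in>B. \<Sum>a\<in>C. f j' a' a) = (\<Sum>j'\<in>A. \<Sum>a\<in>C. \<Sum>a'\<in>B. f j' a' a)"
    by (intro sum.cong refl sum.swap)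
  also have "\<dots> = (\<Sum>a\<in>C. \<Sum>j'\<in>A. \<Sum>a'\<in>B. f j' a' a)"
    by (rule sum.swap)
  finally show ?thesis .
qed

lemma norm_sq_expand:
  fixes P :: "real^'d^'d" and Y :: "'d \<Rightarrow> 'k::finite \<Rightarrow> real" and h :: "'k \<Rightarrow> real"
  shows "(norm (P *v ((\<chi> j a. Y j a) *v (\<chi> a. h a))))\<^sup>2 =
    (\<Sum>k\<in>UNIV. \<Sum>j\<in>UNIV. \<Sum>a\<in>UNIV. \<Sum>j'\<in>UNIV. \<Sum>a'\<in>UNIV.
        P$k$j * P$k$j' * (Y j a * Y j' a' * (h a * h a')))"
proof -
  have "(norm (P *v ((\<chi> j a. Y j a) *v (\<chi> a. h a))))\<^sup>2 =
     (\<Sum>k\<in>UNIV. (\<Sum>j\<in>UNIV. P$k$j * (\<Sum>a\<in>UNIV. Y j a * h a)) * (\<Sum>j\<in>UNIV. P$k$j * (\<Sum>a\<in>UNIV. Y j a * h a)))"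
    by (simp add: power2_norm_eq_inner inner_vec_def matrix_vector_mult_def)
  also have "\<dots> = (\<Sum>k\<in>UNIV. \<Sum>j\<in>UNIV. \<Sum>j'\<in>UNIV. \<Sum>a'\<in>UNIV. \<Sum>a\<in>UNIV.
        h a * (h a' * (Y j a * (Y j' a' * (P $ k $ j * P $ k $ j')))))"
    by (simp add: sum_product sum_distrib_left sum_distrib_right mult_ac)
  also have "\<dots> = (\<Sum>k\<in>UNIV. \<Sum>j\<in>UNIV. \<Sum>a\<in>UNIV. \<Sum>j'\<in>UNIV. \<Sum>a'\<in>UNIV.
        P$k$j * P$k$j' * (Y j a * Y j' a' * (h a * h a')))"
    by (intro sum.cong refl, subst swap3, simp add: mult_ac)
  finally show ?thesis .
qed

lemma mult_if0: "(x::real) * (if b then y else 0) = (if b then x * y else 0)"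
  by simp

lemma expect_proj:
  fixes M :: "'a measure" and Y :: "'d::finite \<Rightarrow> 'k::finite \<Rightarrow> 'a \<Rightarrow> real"
    and h :: "'k \<Rightarrow> 'a \<Rightarrow> real" and P :: "real^'d^'d" and c :: real and e :: "'k \<Rightarrow> real"
  assumes int: "\<And>j a j' a'. integrable M (\<lambda>\<omega>. Y j a \<omega> * Y j' a' \<omega> * (h a \<omega> * h a' \<omega>))"
    and eq: "\<And>j a j' a'. (\<integral>\<omega>. Y j a \<omega> * Y j' a' \<omega> * (h a \<omega> * h a' \<omega>) \<partial>M) =
             (if a' = a then (if j' = j then c * e a else 0) else 0)"
  shows "(\<integral>\<omega>. (norm (P *v ((\<chi> j a. Y j a \<omega>) *v (\<chi> a. h a \<omega>))))\<^sup>2 \<partial>M) =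
         (\<Sum>k\<in>UNIV. \<Sum>j\<in>UNIV. (P$k$j)\<^sup>2) * c * (\<Sum>a\<in>UNIV. e a)"
proof -
  have "(\<integral>\<omega>. (norm (P *v ((\<chi> j a. Y j a \<omega>) *v (\<chi> a. h a \<omega>))))\<^sup>2 \<partial>M) =
     (\<integral>\<omega>. (\<Sum>k\<in>UNIV. \<Sum>j\<in>UNIV. \<Sum>a\<in>UNIV. \<Sum>j'\<in>UNIV. \<Sum>a'\<in>UNIV.
        P$k$j * P$k$j' * (Y j a \<omega> * Y j' a' \<omega> * (h a \<omega> * h a' \<omega>))) \<partial>M)"
    by (simp only: norm_sq_expand)
  also have "\<dots> = (\<Sum>k\<in>UNIV. \<Sum>j\<in>UNIV. \<Sum>a\<in>UNIV. \<Sum>j'\<in>UNIV. \<Sum>a'\<in>UNIV.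
        P$k$j * P$k$j' * (\<integral>\<omega>. Y j a \<omega> * Y j' a' \<omega> * (h a \<omega> * h a' \<omega>) \<partial>M))"
    by (simp add: int integrable_sum integral_sum)
  also have "\<dots> = (\<Sum>k\<in>UNIV. \<Sum>j\<in>UNIV. \<Sum>a\<in>UNIV. (P$k$j)\<^sup>2 * (c * e a))"
    by (simp add: eq mult_if0 power2_eq_square)
  also have "\<dots> = (\<Sum>k\<in>UNIV. \<Sum>j\<in>UNIV. (P$k$j)\<^sup>2) * c * (\<Sum>a\<in>UNIV. e a)"
    by (simp add: sum_distrib_left sum_distrib_right mult_ac)
  finally show ?thesis .
qed



lemma (in prob_space) indep_vars_reindex:
  assumes ind: "indep_vars (\<lambda>_. borel) X UNIV" and inj: "inj f"
  shows "indep_vars (\<lambda>_. borel) (\<lambda>j. X (f j)) UNIV"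
proof -
  have "indep_vars (\<lambda>j. PiM {f j} (\<lambda>_. borel)) (\<lambda>j \<omega>. restrict (\<lambda>i. X i \<omega>) {f j}) UNIV"
    by (rule indep_vars_restrict[OF ind]) (auto simp: disjoint_family_on_def inj_eq[OF inj])
  then have "indep_vars (\<lambda>_. borel) (\<lambda>j \<omega>. (\<lambda>g. g (f j)) (restrict (\<lambda>i. X i \<omega>) {f j})) UNIV"
    by (rule indep_vars_compose2) (auto intro: measurable_component_singleton)
  then show ?thesis by simp
qed

lemma (in prob_space) split_indep:
  assumes ind: "indep_vars (\<lambda>_. borel) X UNIV" and AB: "A \<inter> B = {}"
    and f: "f \<in> borel_measurable (PiM A (\<lambda>_. borel))" and g: "g \<in> borel_measurable (PiM B (\<lambda>_. borel))"
  shows "indep_var borel (\<lambda>\<omega>. f (restrict (\<lambda>i. X i \<omega>) A)) borel (\<lambda>\<omega>. g (restrict (\<lambda>i. X i \<omega>) B))"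
  using indep_var_compose[OF indep_var_restrict[OF ind AB] f g] by (simp add: comp_def)

lemma (in prob_space) row_gauss:
  fixes Z :: "'d::finite \<Rightarrow> 'a \<Rightarrow> real" and x :: "real^'d"
  assumes ind: "indep_vars (\<lambda>_. borel) Z UNIV" and sp: "\<sigma> > 0"
    and dist: "\<And>l. distributed M lborel (Z l) (normal_density 0 \<sigma>)"
  shows "distr M lborel (\<lambda>\<omega>. \<Sum>l\<in>UNIV. Z l \<omega> * x$l) = gauss_meas (\<sigma>\<^sup>2 * (norm x)\<^sup>2)"
proof (cases "x = 0")
  case True
  then have "(\<lambda>\<omega>. \<Sum>l\<in>UNIV. Z l \<omega> * x$l) = (\<lambda>\<omega>. 0)" by simp
  then show ?thesis using True by (simp add: gauss_meas_def)
next
  case False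
  define L where "L = {l. x$l \<noteq> 0}"
  have Lne: "L \<noteq> {}" using False by (auto simp: L_def vec_eq_iff)
  have indV: "indep_vars (\<lambda>_. borel) (\<lambda>l \<omega>. x$l * Z l \<omega>) L"
    using indep_vars_compose2[OF ind, of "\<lambda>l t. x$l * t" "\<lambda>_. borel"]
    by (auto intro: indep_vars_subset)
  have distV: "distributed M lborel (\<lambda>\<omega>. x$l * Z l \<omega>) (normal_density 0 (\<bar>x$l\<bar> * \<sigma>))"
    if "l \<in> L" for l
    using normal_density_affine[OF dist sp, of "x$l" 0 l] that by (simp add: L_def)
  have "distributed M lborel (\<lambda>\<omega>. \<Sum>l\<in>L. x$l * Z l \<omega>)
      (normal_density (\<Sum>l\<in>L. 0) (sqrt (\<Sum>l\<in>L. (\<bar>x$l\<bar> * \<sigma>)\<^sup>2)))"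
    by (rule sum_indep_normal[OF _ Lne indV _ distV]) (auto simp: L_def sp)
  moreover have "(\<lambda>\<omega>. \<Sum>l\<in>L. x$l * Z l \<omega>) = (\<lambda>\<omega>. \<Sum>l\<in>UNIV. Z l \<omega> * x$l)"
    by (intro ext sum.mono_neutral_cong_left) (auto simp: L_def mult.commute)
  moreover have "(\<Sum>l\<in>L. (\<bar>x$l\<bar> * \<sigma>)\<^sup>2) = \<sigma>\<^sup>2 * (norm x)\<^sup>2"
  proof -
    have "(\<Sum>l\<in>L. (\<bar>x$l\<bar> * \<sigma>)\<^sup>2) = (\<Sum>l\<in>UNIV. (\<bar>x$l\<bar> * \<sigma>)\<^sup>2)"
      by (intro sum.mono_neutral_left) (auto simp: L_def)
    also have "\<dots> = \<sigma>\<^sup>2 * (\<Sum>l\<in>UNIV. x$l * x$l)"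
      by (simp add: sum_distrib_left power_mult_distrib power2_eq_square mult_ac)
    finally show ?thesis by (simp add: power2_norm_eq_inner inner_vec_def)
  qed
  moreover have "\<sigma>\<^sup>2 * (norm x)\<^sup>2 > 0" using sp False by simp
  ultimately show ?thesis
    by (simp add: distributed_def gauss_meas_def)
qed

lemma gauss_sq:
  assumes "v \<ge> 0"
  shows "integrable (gauss_meas v) (\<lambda>t. t\<^sup>2) \<and> (\<integral>t. t\<^sup>2 \<partial>gauss_meas v) = v"
proof (cases "v > 0")
  case True
  have i1: "integrable lborel (\<lambda>x. normal_density 0 (sqrt v) x * (x - 0)^2)"
    by (rule integrable_normal_moment) (simp add: True)
  have i2: "(\<integral>x. normal_density 0 (sqrt v) x * (x - 0)^(2*1) \<partial>lborel) = fact (2 * 1) / ((2 / (sqrt v)\<^sup>2) ^ 1 * fact 1)"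
    by (rule integral_normal_moment_even) (simp add: True)
  have i3: "fact (2 * 1) / ((2 / (sqrt v)\<^sup>2) ^ 1 * fact 1) = (sqrt v)\<^sup>2"
    using True by (simp add: fact_numeral)
  show ?thesis using True i1 i2 i3 real_sqrt_gt_zero[OF True]
    by (simp add: gauss_meas_def integrable_density integral_density)
next
  case False
  then have v0: "v = 0" using assms by simp
  interpret prob_space "return lborel (0::real)" by (rule prob_space_return) simp
  have "integrable (return lborel (0::real)) (\<lambda>t. t\<^sup>2)"
    by (rule integrable_const_bound[where B=0]) (auto simp: AE_return)
  then show ?thesis using v0 by (simp add: gauss_meas_def integral_return)
qed

lemma integrable_mult_sq:
  fixes f g :: "'a \<Rightarrow> real"
  assumes "integrable M (\<lambda>x. (f x)\<^sup>2)" "integrable M (\<lambda>x. (g x)\<^sup>2)"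
    and [measurable]: "f \<in> borel_measurable M" "g \<in> borel_measurable M"
  shows "integrable M (\<lambda>x. f x * g x)"
proof -
  have i: "integrable M (\<lambda>x. (f x)\<^sup>2 + (g x)\<^sup>2)" using assms by simp
  have b: "\<bar>f x * g x\<bar> \<le> (f x)\<^sup>2 + (g x)\<^sup>2" for x
  proof -
    have "0 \<le> (\<bar>f x\<bar> - \<bar>g x\<bar>)\<^sup>2" by simp
    then have "2 * (\<bar>f x\<bar> * \<bar>g x\<bar>) \<le> (f x)\<^sup>2 + (g x)\<^sup>2"
      by (simp add: power2_eq_square algebra_simps)
    moreover have "0 \<le> \<bar>f x\<bar> * \<bar>g x\<bar>" by simp
    ultimately have "\<bar>f x\<bar> * \<bar>g x\<bar> \<le> (f x)\<^sup>2 + (g x)\<^sup>2" by linarith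
    then show ?thesis by (simp add: abs_mult)
  qed
  show ?thesis
    by (rule Bochner_Integration.integrable_bound[OF i]) (auto simp: b)
qed



lemma (in prob_space) normal_facts:
  assumes D: "distributed M lborel Z (normal_density 0 s)" and s: "s > 0"
  shows "integrable M Z" "(\<integral>\<omega>. Z \<omega> \<partial>M) = 0"
    "integrable M (\<lambda>\<omega>. (Z \<omega>)\<^sup>2)" "(\<integral>\<omega>. (Z \<omega>)\<^sup>2 \<partial>M) = s\<^sup>2"
proof -
  have "integrable lborel (\<lambda>x. normal_density 0 s x * x)"
    by (rule integrable_normal_moment_nz_1) (simp add: s)
  then show "integrable M Z"
    using distributed_integrable[OF D, of "\<lambda>x. x"] by simp
  show "(\<integral>\<omega>. Z \<omega> \<partial>M) = 0"
    using normal_distributed_expectation[OF s D] by simp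
  have "integrable lborel (\<lambda>x. normal_density 0 s x * (x - 0)^2)"
    by (rule integrable_normal_moment) (simp add: s)
  then show "integrable M (\<lambda>\<omega>. (Z \<omega>)\<^sup>2)"
    using distributed_integrable[OF D, of "\<lambda>x. x\<^sup>2"] by simp
  have i2: "(\<integral>x. normal_density 0 s x * (x - 0)^(2*1) \<partial>lborel) = fact (2 * 1) / ((2 / s\<^sup>2) ^ 1 * fact 1)"
    by (rule integral_normal_moment_even) (simp add: s)
  have i3: "fact (2 * 1) / ((2 / s\<^sup>2) ^ 1 * fact 1) = s\<^sup>2"
    using s by (simp add: fact_numeral)
  show "(\<integral>\<omega>. (Z \<omega>)\<^sup>2 \<partial>M) = s\<^sup>2"
    using distributed_integral[OF D, of "\<lambda>x. x\<^sup>2"] i2 i3 by simp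
qed

lemma (in prob_space) out_moments:
  fixes X :: "'i \<Rightarrow> 'a \<Rightarrow> real" and C :: "'d \<Rightarrow> 'k \<Rightarrow> 'i"
  assumes ind: "indep_vars (\<lambda>_. borel) X UNIV"
    and inj: "\<And>j a j' a'. C j a = C j' a' \<Longrightarrow> j = j' \<and> a = a'"
    and s: "s > 0" and dist: "\<And>j a. distributed M lborel (X (C j a)) (normal_density 0 s)"
  shows "integrable M (\<lambda>\<omega>. X (C j a) \<omega> * X (C j' a') \<omega>) \<and>
    (\<integral>\<omega>. X (C j a) \<omega> * X (C j' a') \<omega> \<partial>M) = (if a' = a then if j' = j then s\<^sup>2 else 0 else 0)"
proof (cases "a' = a \<and> j' = j")
  case True
  then show ?thesis using normal_facts[OF dist s, of j a] by (simp add: power2_eq_square)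
next
  case False
  then have ne: "C j a \<noteq> C j' a'" using inj by blast
  have "indep_var borel (\<lambda>\<omega>. (\<lambda>r. r (C j a)) (restrict (\<lambda>i. X i \<omega>) {C j a}))
                  borel (\<lambda>\<omega>. (\<lambda>r. r (C j' a')) (restrict (\<lambda>i. X i \<omega>) {C j' a'}))"
    by (rule split_indep[OF ind]) (auto simp: ne intro: measurable_component_singleton)
  then have I: "indep_var borel (X (C j a)) borel (X (C j' a'))" by simp
  show ?thesis using False
    indep_var_lebesgue_integral[OF I] indep_var_integrable[OF I]
    normal_facts[OF dist s, of j a] normal_facts[OF dist s, of j' a']
    by auto
qed

lemma (in prob_space) combine:
  fixes X :: "'i \<Rightarrow> 'a \<Rightarrow> real" and C :: "'d \<Rightarrow> 'k \<Rightarrow> 'i"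
    and H :: "'k \<Rightarrow> ('i \<Rightarrow> real) \<Rightarrow> real" and h :: "'k \<Rightarrow> 'a \<Rightarrow> real"
  assumes ind: "indep_vars (\<lambda>_. borel) X UNIV"
    and inj: "\<And>j a j' a'. C j a = C j' a' \<Longrightarrow> j = j' \<and> a = a'"
    and s: "s > 0" and dist: "\<And>j a. distributed M lborel (X (C j a)) (normal_density 0 s)"
    and AB: "{i. \<exists>j a. i = C j a} \<inter> B = {}"
    and Hm: "\<And>a. H a \<in> borel_measurable (PiM B (\<lambda>_. borel))"
    and hdef: "\<And>a \<omega>. h a \<omega> = H a (restrict (\<lambda>i. X i \<omega>) B)"
    and hint: "\<And>a. integrable M (\<lambda>\<omega>. (h a \<omega>)\<^sup>2)"
    and hint2: "\<And>a. (\<integral>\<omega>. (h a \<omega>)\<^sup>2 \<partial>M) = e"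
  shows "integrable M (\<lambda>\<omega>. X (C j a) \<omega> * X (C j' a') \<omega> * (h a \<omega> * h a' \<omega>)) \<and>
    (\<integral>\<omega>. X (C j a) \<omega> * X (C j' a') \<omega> * (h a \<omega> * h a' \<omega>) \<partial>M) =
       (if a' = a then if j' = j then s\<^sup>2 * e else 0 else 0)"
proof -
  define A where "A = {i. \<exists>j a. i = C j a}"
  have Xm: "X i \<in> borel_measurable M" for i using ind by (auto simp: indep_vars_def)
  have Rm: "(\<lambda>\<omega>. restrict (\<lambda>i. X i \<omega>) B) \<in> measurable M (PiM B (\<lambda>_. borel))"
    by (rule measurable_restrict) (simp add: Xm)
  have hm: "h a \<in> borel_measurable M" for a
    unfolding hdef[abs_def] using measurable_comp[OF Rm Hm] by (simp add: comp_def)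
  have c1: "(\<lambda>r. r (C j a)) \<in> borel_measurable (PiM A (\<lambda>_. borel))" for j a
    by (rule measurable_component_singleton) (auto simp: A_def)
  have mem: "C j a \<in> A" for j a by (auto simp: A_def)
  have AB': "A \<inter> B = {}" using AB by (simp add: A_def)
  have "indep_var borel (\<lambda>\<omega>. (\<lambda>r. r (C j a) * r (C j' a')) (restrict (\<lambda>i. X i \<omega>) A))
                  borel (\<lambda>\<omega>. (\<lambda>r. H a r * H a' r) (restrict (\<lambda>i. X i \<omega>) B))"
    by (rule split_indep[OF ind AB' borel_measurable_times[OF c1 c1] borel_measurable_times[OF Hm Hm]])
  then have I: "indep_var borel (\<lambda>\<omega>. X (C j a) \<omega> * X (C j' a') \<omega>) borel (\<lambda>\<omega>. h a \<omega> * h a' \<omega>)"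
    using mem by (simp add: restrict_apply' hdef)
  have OM: "integrable M (\<lambda>\<omega>. X (C j a) \<omega> * X (C j' a') \<omega>) \<and>
    (\<integral>\<omega>. X (C j a) \<omega> * X (C j' a') \<omega> \<partial>M) = (if a' = a then if j' = j then s\<^sup>2 else 0 else 0)"
    by (rule out_moments[OF ind inj s dist])
  note iU = conjunct1[OF OM] and eU = conjunct2[OF OM]
  have iV: "integrable M (\<lambda>\<omega>. h a \<omega> * h a' \<omega>)"
    by (rule integrable_mult_sq[OF hint hint hm hm])
  have "integrable M (\<lambda>\<omega>. (X (C j a) \<omega> * X (C j' a') \<omega>) * (h a \<omega> * h a' \<omega>))"
    by (rule indep_var_integrable[OF I iU iV])
  moreover have EP: "(\<integral>\<omega>. (X (C j a) \<omega> * X (C j' a') \<omega>) * (h a \<omega> * h a' \<omega>) \<partial>M) =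
     (\<integral>\<omega>. X (C j a) \<omega> * X (C j' a') \<omega> \<partial>M) * (\<integral>\<omega>. h a \<omega> * h a' \<omega> \<partial>M)"
    by (rule indep_var_lebesgue_integral[OF I iU iV])
  have "(\<integral>\<omega>. (X (C j a) \<omega> * X (C j' a') \<omega>) * (h a \<omega> * h a' \<omega>) \<partial>M) =
       (if a' = a then if j' = j then s\<^sup>2 * e else 0 else 0)"
  proof (cases "a' = a \<and> j' = j")
    case True
    have "(\<integral>\<omega>. h a \<omega> * h a' \<omega> \<partial>M) = e"
      using hint2[of a] True by (simp add: power2_eq_square)
    then show ?thesis using EP eU True by simp
  next
    case False
    then show ?thesis using EP eU by auto
  qed
  ultimately show ?thesis by simp
qed



theorem theorem2:
  fixes M :: "'a measure"
    and X :: "('m::finite, 'd::finite, 'r::finite) wentry \<Rightarrow> 'a \<Rightarrow> real"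
    and \<sigma> \<tau>s \<tau>g :: real
    and \<phi> \<psi> :: "real \<Rightarrow> real"
    and x :: "real^'d"
    and P :: "real^'d^'d"
  assumes "prob_space M"
    and "\<sigma> > 0" and "\<tau>s > 0" and "\<tau>g > 0"
    and "\<phi> \<in> borel_measurable borel" and "\<psi> \<in> borel_measurable borel"
    and "\<forall>v\<ge>0. integrable (gauss_meas v) (\<lambda>t. (\<phi> t)\<^sup>2)"
    and "\<forall>v\<ge>0. integrable (gauss_meas v) (\<lambda>t. (\<psi> t)\<^sup>2)"
    and "prob_space.indep_vars M (\<lambda>_. borel) X UNIV"
    and "\<And>i j. distributed M lborel (X (Ein i j)) (normal_density 0 \<sigma>)"
    and "\<And>i j. distributed M lborel (X (Eg i j)) (normal_density 0 \<sigma>)"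
    and "\<And>i j. distributed M lborel (X (Eu i j)) (normal_density 0 \<sigma>)"
    and "\<And>i j. distributed M lborel (X (Eo i j)) (normal_density 0 \<tau>s)"
    and "\<And>i j. distributed M lborel (X (Eot i j)) (normal_density 0 \<tau>g)"
    and "transpose P = P" and "P ** P = P"
  shows
    "let \<nu> = \<sigma>\<^sup>2 * (norm x)\<^sup>2;
         E\<phi> = (\<integral>t. (\<phi> t)\<^sup>2 \<partial>gauss_meas \<nu>);
         E\<psi> = (\<integral>t. (\<psi> t)\<^sup>2 \<partial>gauss_meas \<nu>);
         E_single = (\<integral>\<omega>. (norm (P *v F_single \<phi> X \<omega> x))\<^sup>2 \<partial>M);
         E_gate = (\<integral>\<omega>. (norm (P *v F_gate \<psi> X \<omega> x))\<^sup>2 \<partial>M)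
     in E_single = real (rank P) * \<tau>s\<^sup>2 * real CARD('m) * E\<phi>
      \<and> E_gate = real (rank P) * \<tau>g\<^sup>2 * real CARD('r) * \<nu> * E\<psi>
      \<and> (rank P \<ge> 1 \<and> E\<phi> > 0 \<longrightarrow>
           E_gate / E_single = (\<tau>g\<^sup>2 / \<tau>s\<^sup>2) * (real CARD('r) / real CARD('m)) * (\<nu> * E\<psi> / E\<phi>))"
proof -
  interpret prob_space M by (rule assms(1))
  have ind: "indep_vars (\<lambda>_. borel) X UNIV" using assms(9) by simp
  have Xm[measurable]: "X i \<in> borel_measurable M" for i using ind by (auto simp: indep_vars_def)
  have \<phi>m[measurable]: "\<phi> \<in> borel_measurable borel" using assms(5) .
  have \<psi>m[measurable]: "\<psi> \<in> borel_measurable borel" using assms(6) .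
  define \<nu> where "\<nu> = \<sigma>\<^sup>2 * (norm x)\<^sup>2"
  have \<nu>0: "0 \<le> \<nu>" by (simp add: \<nu>_def)
  define E\<phi> where "E\<phi> = (\<integral>t. (\<phi> t)\<^sup>2 \<partial>gauss_meas \<nu>)"
  define E\<psi> where "E\<psi> = (\<integral>t. (\<psi> t)\<^sup>2 \<partial>gauss_meas \<nu>)"
  define gi where "gi a \<omega> = (\<Sum>l\<in>UNIV. X (Ein a l) \<omega> * x$l)" for a \<omega>
  define gg where "gg a \<omega> = (\<Sum>l\<in>UNIV. X (Eg a l) \<omega> * x$l)" for a \<omega>
  define gu where "gu a \<omega> = (\<Sum>l\<in>UNIV. X (Eu a l) \<omega> * x$l)" for a \<omega>
  have gim[measurable]: "gi a \<in> borel_measurable M" for a unfolding gi_def by measurable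
  have ggm[measurable]: "gg a \<in> borel_measurable M" for a unfolding gg_def by measurable
  have gum[measurable]: "gu a \<in> borel_measurable M" for a unfolding gu_def by measurable
  have rowi: "distr M lborel (gi a) = gauss_meas \<nu>" for a
    unfolding gi_def \<nu>_def
    by (rule row_gauss[of "\<lambda>l. X (Ein a l)" \<sigma> x, OF indep_vars_reindex[OF ind] assms(2) assms(10)])
       (simp add: inj_def)
  have rowg: "distr M lborel (gg a) = gauss_meas \<nu>" for a
    unfolding gg_def \<nu>_def
    by (rule row_gauss[of "\<lambda>l. X (Eg a l)" \<sigma> x, OF indep_vars_reindex[OF ind] assms(2) assms(11)])
       (simp add: inj_def)
  have rowu: "distr M lborel (gu a) = gauss_meas \<nu>" for a
    unfolding gu_def \<nu>_def
    by (rule row_gauss[of "\<lambda>l. X (Eu a l)" \<sigma> x, OF indep_vars_reindex[OF ind] assms(2) assms(12)])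
       (simp add: inj_def)
  have tr: "integrable M (\<lambda>\<omega>. f (g \<omega>)) \<and> (\<integral>\<omega>. f (g \<omega>) \<partial>M) = integral\<^sup>L (gauss_meas \<nu>) f"
    if "distr M lborel g = gauss_meas \<nu>" "g \<in> borel_measurable M" "f \<in> borel_measurable borel"
       "integrable (gauss_meas \<nu>) f" for f :: "real \<Rightarrow> real" and g
    using integrable_distr_eq[of g M lborel f] integral_distr[of g M lborel f] that by simp
  have intphi: "integrable (gauss_meas \<nu>) (\<lambda>t. (\<phi> t)\<^sup>2)" using assms(7) \<nu>0 by blast
  have intpsi: "integrable (gauss_meas \<nu>) (\<lambda>t. (\<psi> t)\<^sup>2)" using assms(8) \<nu>0 by blast
  have gsq: "integrable (gauss_meas \<nu>) (\<lambda>t. t\<^sup>2) \<and> (\<integral>t. t\<^sup>2 \<partial>gauss_meas \<nu>) = \<nu>"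
    by (rule gauss_sq[OF \<nu>0])

  define Bs where "Bs = {i::('m,'d,'r) wentry. \<exists>a l. i = Ein a l}"
  define Hs where "Hs a r = \<phi> (\<Sum>l\<in>UNIV. r (Ein a l) * x$l)" for a and r :: "('m,'d,'r) wentry \<Rightarrow> real"
  define hs where "hs a \<omega> = \<phi> (gi a \<omega>)" for a \<omega>
  have memBs: "Ein a l \<in> Bs" for a l by (auto simp: Bs_def)
  have hs_eq: "hs a \<omega> = Hs a (restrict (\<lambda>i. X i \<omega>) Bs)" for a \<omega>
    using memBs by (simp add: hs_def Hs_def gi_def restrict_apply')
  have compBs: "(\<lambda>r. r (Ein a l)) \<in> borel_measurable (PiM Bs (\<lambda>_. borel))" for a l
    by (rule measurable_component_singleton) (rule memBs)
  have Hsm: "Hs a \<in> borel_measurable (PiM Bs (\<lambda>_. borel))" for a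
    unfolding Hs_def
    by (intro measurable_compose[OF _ \<phi>m] borel_measurable_sum borel_measurable_times compBs
        borel_measurable_const)
  have hs_ie: "integrable M (\<lambda>\<omega>. (hs a \<omega>)\<^sup>2) \<and> (\<integral>\<omega>. (hs a \<omega>)\<^sup>2 \<partial>M) = E\<phi>" for a
    unfolding hs_def E\<phi>_def by (rule tr[OF rowi gim _ intphi]) measurable
  have disjS: "{i. \<exists>j a. i = Eo j a} \<inter> Bs = {}" by (auto simp: Bs_def)
  have C1: "integrable M (\<lambda>\<omega>. X (Eo j a) \<omega> * X (Eo j' a') \<omega> * (hs a \<omega> * hs a' \<omega>)) \<and>
    (\<integral>\<omega>. X (Eo j a) \<omega> * X (Eo j' a') \<omega> * (hs a \<omega> * hs a' \<omega>) \<partial>M) =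
       (if a' = a then if j' = j then \<tau>s\<^sup>2 * E\<phi> else 0 else 0)" for j a j' a'
    by (rule combine[OF ind _ assms(3) assms(13) disjS Hsm hs_eq conjunct1[OF hs_ie] conjunct2[OF hs_ie]])
       simp
  have Fs: "F_single \<phi> X \<omega> x = (\<chi> j a. X (Eo j a) \<omega>) *v (\<chi> a. hs a \<omega>)" for \<omega>
  proof -
    have "(\<chi> k. \<phi> ((Wi X \<omega> *v x) $ k)) = (\<chi> a. hs a \<omega>)"
      by (simp add: vec_eq_iff Wi_def hs_def gi_def matrix_vector_mult_def)
    then show ?thesis by (simp add: F_single_def Wo_def)
  qed
  have ES: "(\<integral>\<omega>. (norm (P *v F_single \<phi> X \<omega> x))\<^sup>2 \<partial>M) =
      (\<Sum>k\<in>UNIV. \<Sum>j\<in>UNIV. (P$k$j)\<^sup>2) * \<tau>s\<^sup>2 * (\<Sum>a\<in>(UNIV::'m set). E\<phi>)"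
    unfolding Fs
    by (rule expect_proj[of M "\<lambda>j a \<omega>. X (Eo j a) \<omega>" hs]) (use C1 in auto)

  define Bg where "Bg = {i::('m,'d,'r) wentry. (\<exists>a l. i = Eg a l) \<or> (\<exists>a l. i = Eu a l)}"
  define Hg where "Hg a r = \<psi> (\<Sum>l\<in>UNIV. r (Eg a l) * x$l) * (\<Sum>l\<in>UNIV. r (Eu a l) * x$l)"
    for a and r :: "('m,'d,'r) wentry \<Rightarrow> real"
  define hg where "hg a \<omega> = \<psi> (gg a \<omega>) * gu a \<omega>" for a \<omega>
  have memBg: "Eg a l \<in> Bg" "Eu a l \<in> Bg" for a l by (auto simp: Bg_def)
  have hg_eq: "hg a \<omega> = Hg a (restrict (\<lambda>i. X i \<omega>) Bg)" for a \<omega>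
    using memBg by (simp add: hg_def Hg_def gg_def gu_def restrict_apply')
  have compBg1: "(\<lambda>r. r (Eg a l)) \<in> borel_measurable (PiM Bg (\<lambda>_. borel))" for a l
    by (rule measurable_component_singleton) (rule memBg)
  have compBg2: "(\<lambda>r. r (Eu a l)) \<in> borel_measurable (PiM Bg (\<lambda>_. borel))" for a l
    by (rule measurable_component_singleton) (rule memBg)
  have Hgm: "Hg a \<in> borel_measurable (PiM Bg (\<lambda>_. borel))" for a
    unfolding Hg_def
    by (intro borel_measurable_times measurable_compose[OF _ \<psi>m] borel_measurable_sum compBg1 compBg2
        borel_measurable_const)
  have hg_ie: "integrable M (\<lambda>\<omega>. (hg a \<omega>)\<^sup>2) \<and> (\<integral>\<omega>. (hg a \<omega>)\<^sup>2 \<partial>M) = E\<psi> * \<nu>" for a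
  proof -
    define Ag where "Ag = {i::('m,'d,'r) wentry. \<exists>a l. i = Eg a l}"
    define Au where "Au = {i::('m,'d,'r) wentry. \<exists>a l. i = Eu a l}"
    have mg: "Eg a l \<in> Ag" for l by (auto simp: Ag_def)
    have mu: "Eu a l \<in> Au" for l by (auto simp: Au_def)
    have cg: "(\<lambda>r. r (Eg a l)) \<in> borel_measurable (PiM Ag (\<lambda>_. borel))" for l
      by (rule measurable_component_singleton) (rule mg)
    have cu: "(\<lambda>r. r (Eu a l)) \<in> borel_measurable (PiM Au (\<lambda>_. borel))" for l
      by (rule measurable_component_singleton) (rule mu)
    have f1: "(\<lambda>r. (\<psi> (\<Sum>l\<in>UNIV. r (Eg a l) * x$l))\<^sup>2) \<in> borel_measurable (PiM Ag (\<lambda>_. borel))"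
      by (intro borel_measurable_power measurable_compose[OF _ \<psi>m] borel_measurable_sum
          borel_measurable_times cg borel_measurable_const)
    have f2: "(\<lambda>r. (\<Sum>l\<in>UNIV. r (Eu a l) * x$l)\<^sup>2) \<in> borel_measurable (PiM Au (\<lambda>_. borel))"
      by (intro borel_measurable_power borel_measurable_sum
          borel_measurable_times cu borel_measurable_const)
    have disj: "Ag \<inter> Au = {}" by (auto simp: Ag_def Au_def)
    have "indep_var borel (\<lambda>\<omega>. (\<lambda>r. (\<psi> (\<Sum>l\<in>UNIV. r (Eg a l) * x$l))\<^sup>2) (restrict (\<lambda>i. X i \<omega>) Ag))
        borel (\<lambda>\<omega>. (\<lambda>r. (\<Sum>l\<in>UNIV. r (Eu a l) * x$l)\<^sup>2) (restrict (\<lambda>i. X i \<omega>) Au))"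
      by (rule split_indep[OF ind disj f1 f2])
    then have I: "indep_var borel (\<lambda>\<omega>. (\<psi> (gg a \<omega>))\<^sup>2) borel (\<lambda>\<omega>. (gu a \<omega>)\<^sup>2)"
      using mg mu by (simp add: restrict_apply' gg_def gu_def)
    have A1: "integrable M (\<lambda>\<omega>. (\<psi> (gg a \<omega>))\<^sup>2) \<and> (\<integral>\<omega>. (\<psi> (gg a \<omega>))\<^sup>2 \<partial>M) = E\<psi>"
      unfolding E\<psi>_def by (rule tr[OF rowg ggm _ intpsi]) measurable
    have A2: "integrable M (\<lambda>\<omega>. (gu a \<omega>)\<^sup>2) \<and> (\<integral>\<omega>. (gu a \<omega>)\<^sup>2 \<partial>M) = \<nu>"
      using tr[OF rowu gum _ conjunct1[OF gsq]] gsq by simp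
    have sq: "(\<lambda>\<omega>. (hg a \<omega>)\<^sup>2) = (\<lambda>\<omega>. (\<psi> (gg a \<omega>))\<^sup>2 * (gu a \<omega>)\<^sup>2)"
      by (simp add: hg_def power_mult_distrib)
    show ?thesis unfolding sq
      using indep_var_integrable[OF I conjunct1[OF A1] conjunct1[OF A2]]
        indep_var_lebesgue_integral[OF I conjunct1[OF A1] conjunct1[OF A2]] A1 A2 by simp
  qed
  have disjG: "{i. \<exists>j a. i = Eot j a} \<inter> Bg = {}" by (auto simp: Bg_def)
  have C2: "integrable M (\<lambda>\<omega>. X (Eot j a) \<omega> * X (Eot j' a') \<omega> * (hg a \<omega> * hg a' \<omega>)) \<and>
    (\<integral>\<omega>. X (Eot j a) \<omega> * X (Eot j' a') \<omega> * (hg a \<omega> * hg a' \<omega>) \<partial>M) =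
       (if a' = a then if j' = j then \<tau>g\<^sup>2 * (E\<psi> * \<nu>) else 0 else 0)" for j a j' a'
    by (rule combine[OF ind _ assms(4) assms(14) disjG Hgm hg_eq conjunct1[OF hg_ie] conjunct2[OF hg_ie]])
       simp
  have Fg: "F_gate \<psi> X \<omega> x = (\<chi> j a. X (Eot j a) \<omega>) *v (\<chi> a. hg a \<omega>)" for \<omega>
  proof -
    have "(\<chi> k. \<psi> ((Wg X \<omega> *v x) $ k) * (Wu X \<omega> *v x) $ k) = (\<chi> a. hg a \<omega>)"
      by (simp add: vec_eq_iff Wg_def Wu_def hg_def gg_def gu_def matrix_vector_mult_def)
    then show ?thesis by (simp add: F_gate_def Wot_def)
  qed
  have EG: "(\<integral>\<omega>. (norm (P *v F_gate \<psi> X \<omega> x))\<^sup>2 \<partial>M) =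
      (\<Sum>k\<in>UNIV. \<Sum>j\<in>UNIV. (P$k$j)\<^sup>2) * \<tau>g\<^sup>2 * (\<Sum>a\<in>(UNIV::'r set). E\<psi> * \<nu>)"
    unfolding Fg
    by (rule expect_proj[of M "\<lambda>j a \<omega>. X (Eot j a) \<omega>" hg]) (use C2 in auto)

  have R: "(\<Sum>k\<in>UNIV. \<Sum>j\<in>UNIV. (P$k$j)\<^sup>2) = real (rank P)"
    by (rule proj_sumsq_rank[OF assms(15) assms(16)])
  have ES': "(\<integral>\<omega>. (norm (P *v F_single \<phi> X \<omega> x))\<^sup>2 \<partial>M) = real (rank P) * \<tau>s\<^sup>2 * real CARD('m) * E\<phi>"
    using ES R by simp
  have EG': "(\<integral>\<omega>. (norm (P *v F_gate \<psi> X \<omega> x))\<^sup>2 \<partial>M) = real (rank P) * \<tau>g\<^sup>2 * real CARD('r) * \<nu> * E\<psi>"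
    using EG R by (simp add: mult_ac)
  have ratio: "(real (rank P) * \<tau>g\<^sup>2 * real CARD('r) * \<nu> * E\<psi>) / (real (rank P) * \<tau>s\<^sup>2 * real CARD('m) * E\<phi>)
      = (\<tau>g\<^sup>2 / \<tau>s\<^sup>2) * (real CARD('r) / real CARD('m)) * (\<nu> * E\<psi> / E\<phi>)"
    if "rank P \<ge> 1 \<and> E\<phi> > 0"
    using that assms(3) by (simp add: field_simps)
  show ?thesis
    unfolding Let_def \<nu>_def[symmetric] E\<phi>_def[symmetric] E\<psi>_def[symmetric] ES' EG'
    using ratio by simp
qed


end
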